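(* Let $G$ be a locally compact group, $K$ a compact subgroup of $G$, and $\omega$ a $K$-bi-invariant weight on $G$. Then for every $f \in C_c(K\setminus G/K)$ and every $h \in C_c(G)$, $$(h \ast_\omega f)^{\sharp} = h^{\sharp} \ast_\omega f.$$
   Context: A weight on $G$ is a continuous function $\omega: G \to (0,\infty)$; it is $K$-bi-invariant if $\omega(k_1 x k_2)=\omega(x)$ for all $x\in G$, $k_1,k_2\in K$. Integration on $G$ is with respect to a fixed left Haar measure, and on $K$ with respect to the normalized Haar measure of $K$. The weighted convolution is $(f \ast_\omega g)(x) = \int_G f(y) g(y^{-1}x) \frac{\omega(y)\omega(y^{-1}x)}{\omega(x)}\,dy$. $C_c(G)$ is the space of continuous compactly supported complex functions on $G$, and $C_c(K\setminus G/K)$ the subspace of $K$-bi-invariant ones. For a function $f$ on $G$, $f^{\sharp}(x) = \int_K\int_K f(k_1 x k_2)\,dk_1\,dk_2$. *)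

theory Defs
  imports "HOL-Analysis.Analysis"
begin

text \<open>The group G is a type 'a of class topological_group_add (a possibly
non-commutative group written additively: x + y is the product, -y the inverse,
so y^{-1}x is written -y + x), Hausdorff, and assumed locally compact.\<close>

definition compact_subgroup :: "'a::topological_group_add set \<Rightarrow> bool" where
  "compact_subgroup K \<longleftrightarrow> compact K \<and> 0 \<in> K \<and>
     (\<forall>a\<in>K. \<forall>b\<in>K. a + b \<in> K) \<and> (\<forall>a\<in>K. - a \<in> K)"

definition radon_regular :: "'a::topological_space measure \<Rightarrow> bool" where
  "radon_regular \<mu> \<longleftrightarrow>
     (\<forall>A\<in>sets borel. emeasure \<mu> A = (INF U\<in>{U. open U \<and> A \<subseteq> U}. emeasure \<mu> U)) \<and>
     (\<forall>U. open U \<longrightarrow> emeasure \<mu> U = (SUP C\<in>{C. compact C \<and> C \<subseteq> U}. emeasure \<mu> C))"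

definition left_haar_measure :: "'a::topological_group_add measure \<Rightarrow> bool" where
  "left_haar_measure \<mu> \<longleftrightarrow> sets \<mu> = sets borel \<and>
     (\<forall>g. \<forall>A\<in>sets borel. emeasure \<mu> ((+) g ` A) = emeasure \<mu> A) \<and>
     (\<forall>C. compact C \<longrightarrow> emeasure \<mu> C < \<infinity>) \<and>
     (\<forall>U. open U \<and> U \<noteq> {} \<longrightarrow> emeasure \<mu> U > 0) \<and>
     radon_regular \<mu>"

text \<open>The normalized Haar measure of the compact subgroup K, realized as a Borel
measure on G concentrated on K.\<close>
definition normalized_haar_on :: "'a::topological_group_add set \<Rightarrow> 'a measure \<Rightarrow> bool" where
  "normalized_haar_on K \<nu> \<longleftrightarrow> sets \<nu> = sets borel \<and>
     emeasure \<nu> K = 1 \<and> emeasure \<nu> (- K) = 0 \<and>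
     (\<forall>k\<in>K. \<forall>A\<in>sets borel. emeasure \<nu> ((+) k ` A) = emeasure \<nu> A) \<and>
     radon_regular \<nu>"

definition weight :: "('a::topological_space \<Rightarrow> real) \<Rightarrow> bool" where
  "weight \<omega> \<longleftrightarrow> continuous_on UNIV \<omega> \<and> (\<forall>x. \<omega> x > 0)"

definition bi_invariant :: "'a::group_add set \<Rightarrow> ('a \<Rightarrow> 'b) \<Rightarrow> bool" where
  "bi_invariant K f \<longleftrightarrow> (\<forall>x. \<forall>k1\<in>K. \<forall>k2\<in>K. f (k1 + x + k2) = f x)"

definition Cc :: "('a::topological_space \<Rightarrow> complex) set" where
  "Cc = {f. continuous_on UNIV f \<and> compact (closure {x. f x \<noteq> 0})}"

definition Cc_bi :: "'a::{group_add,topological_space} set \<Rightarrow> ('a \<Rightarrow> complex) set" where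
  "Cc_bi K = {f \<in> Cc. bi_invariant K f}"

definition wconv :: "'a::group_add measure \<Rightarrow> ('a \<Rightarrow> real) \<Rightarrow> ('a \<Rightarrow> complex) \<Rightarrow> ('a \<Rightarrow> complex) \<Rightarrow> 'a \<Rightarrow> complex" where
  "wconv \<mu> \<omega> f g x = (\<integral>y. f y * g (- y + x) * complex_of_real (\<omega> y * \<omega> (- y + x) / \<omega> x) \<partial>\<mu>)"

definition sharp :: "'a::group_add measure \<Rightarrow> ('a \<Rightarrow> complex) \<Rightarrow> 'a \<Rightarrow> complex" where
  "sharp \<nu> f x = (\<integral>k1. (\<integral>k2. f (k1 + x + k2) \<partial>\<nu>) \<partial>\<nu>)"

end

theory Submission
  imports Defs
begin


lemma compact_borel_t2: "compact (C::'a::t2_space set) \<Longrightarrow> C \<in> sets borel"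
  by (simp add: compact_imp_closed borel_closed)

lemma cont_meas:
  assumes "sets M = sets borel" "continuous_on UNIV f"
  shows "f \<in> borel_measurable M"
  unfolding measurable_cong_sets[OF assms(1) refl] by (rule borel_measurable_continuous_onI[OF assms(2)])

lemma integrable_cont_cpt:
  fixes f :: "'a::t2_space \<Rightarrow> 'c::{banach, second_countable_topology}"
  assumes M: "sets M = sets borel" and cf: "continuous_on UNIV f" and C: "compact C"
    and fin: "emeasure M C < \<infinity>" and z: "AE x in M. x \<notin> C \<longrightarrow> f x = 0"
  shows "integrable M f"
proof -
  have "bounded (f ` C)"
    using compact_continuous_image[OF continuous_on_subset[OF cf] C] compact_imp_bounded by blast
  then obtain B where B: "\<And>x. x \<in> C \<Longrightarrow> norm (f x) \<le> B" by (auto simp: bounded_iff)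
  define B' where "B' = max B 0"
  have Cs: "C \<in> sets M" using M compact_borel_t2[OF C] by simp
  have "integrable M (indicator C :: 'a \<Rightarrow> real)"
    using Cs fin by (simp add: integrable_indicator_iff sets.Int_space_eq2)
  then have i: "integrable M (\<lambda>x. B' * indicator C x)" by simp
  show ?thesis
  proof (rule Bochner_Integration.integrable_bound[OF i])
    show "f \<in> borel_measurable M" using cont_meas[OF M cf] .
    show "AE x in M. norm (f x) \<le> norm (B' * indicator C x)"
      using z by eventually_elim (auto simp: B'_def indicator_def dest: B)
  qed
qed

lemma integral_translate:
  fixes f :: "'a::topological_group_add \<Rightarrow> 'c::{banach, second_countable_topology}"
  assumes M: "sets M = sets borel" and inv: "\<forall>A\<in>sets borel. emeasure M ((+) g ` A) = emeasure M A"
    and f: "continuous_on UNIV f"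
  shows "(\<integral>x. f (g + x) \<partial>M) = integral\<^sup>L M f"
proof -
  have Tc: "continuous_on UNIV (\<lambda>x. g + x)" by (intro continuous_intros)
  have T: "(\<lambda>x. g + x) \<in> measurable M M"
    using borel_measurable_continuous_onI[OF Tc] measurable_cong_sets[OF M M] by simp
  have vim: "(\<lambda>x. g + x) -` A = (+) (- g) ` A" for A
  proof
    show "(\<lambda>x. g + x) -` A \<subseteq> (+) (- g) ` A"
    proof
      fix x assume "x \<in> (\<lambda>x. g + x) -` A"
      then have "g + x \<in> A" by simp
      moreover have "x = - g + (g + x)" by (simp add: add.assoc[symmetric])
      ultimately show "x \<in> (+) (- g) ` A" by blast
    qed
  qed (auto simp: add.assoc[symmetric])
  have D: "distr M M (\<lambda>x. g + x) = M"
  proof (rule measure_eqI)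
    fix A assume A: "A \<in> sets (distr M M (\<lambda>x. g + x))"
    then have A': "A \<in> sets borel" using M by simp
    have "emeasure (distr M M (\<lambda>x. g + x)) A = emeasure M ((\<lambda>x. g + x) -` A \<inter> space M)"
      using A T by (simp add: emeasure_distr)
    also have "\<dots> = emeasure M ((+) (- g) ` A)"
      using sets_eq_imp_space_eq[OF M] by (simp add: vim)
    also have "\<dots> = emeasure M A"
    proof -
      have "(\<lambda>x. g + x) -` A \<inter> space M \<in> sets M" using measurable_sets[OF T] A M by simp
      then have b: "(+) (- g) ` A \<in> sets borel" using sets_eq_imp_space_eq[OF M] M by (simp add: vim)
      have "(+) g ` ((+) (- g) ` A) = A" by (auto simp: image_image add.assoc[symmetric])
      then show ?thesis using inv b by metis
    qed
    finally show "emeasure (distr M M (\<lambda>x. g + x)) A = emeasure M A" .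
  qed simp
  have "integral\<^sup>L M f = integral\<^sup>L (distr M M (\<lambda>x. g + x)) f" by (simp add: D)
  also have "\<dots> = (\<integral>x. f (g + x) \<partial>M)"
    by (rule integral_distr[OF T cont_meas[OF M f]])
  finally show ?thesis by simp
qed

lemma cont_param_integral:
  fixes F :: "'b::topological_space \<Rightarrow> 'a::t2_space \<Rightarrow> 'c::{banach, second_countable_topology}"
  assumes M: "sets M = sets borel"
    and cont: "continuous_on UNIV (\<lambda>p. F (fst p) (snd p))"
    and loc: "\<And>p. \<exists>N B. open N \<and> p \<in> N \<and> compact B \<and> emeasure M B < \<infinity> \<and>
                 (AE y in M. y \<notin> B \<longrightarrow> (\<forall>x\<in>N. F x y = 0))"
  shows "continuous_on UNIV (\<lambda>x. \<integral>y. F x y \<partial>M)"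
proof -
  have cx: "continuous_on UNIV (F x)" for x
  proof -
    have "continuous_on UNIV ((\<lambda>p. F (fst p) (snd p)) \<circ> (\<lambda>y. (x, y)))"
      by (intro continuous_on_compose continuous_intros continuous_on_subset[OF cont]) auto
    then show ?thesis by (simp add: o_def)
  qed
  have "((\<lambda>x. \<integral>y. F x y \<partial>M) \<longlongrightarrow> (\<integral>y. F p y \<partial>M)) (at p within UNIV)" for p
  proof -
    obtain N B where NB: "open N" "p \<in> N" "compact B" "emeasure M B < \<infinity>"
      and z: "AE y in M. y \<notin> B \<longrightarrow> (\<forall>x\<in>N. F x y = 0)" using loc by blast
    have intx: "integrable M (F x)" if "x \<in> N" for x
    proof (rule integrable_cont_cpt[OF M cx NB(3,4)])
      show "AE y in M. y \<notin> B \<longrightarrow> F x y = 0" using z by eventually_elim (use that in auto)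
    qed
    define c where "c = measure M B"
    have c0: "c \<ge> 0" by (simp add: c_def)
    have iB: "integrable M (indicator B :: 'a \<Rightarrow> real)"
      using NB(4) M compact_borel_t2[OF NB(3)]
      by (simp add: integrable_indicator_iff sets.Int_space_eq2)
    have mB: "measure M (B \<inter> space M) = c" using sets_eq_imp_space_eq[OF M] by (simp add: c_def)
    show ?thesis unfolding tendsto_iff
    proof (intro allI impI)
      fix e :: real assume e: "e > 0"
      define e' where "e' = e / (c + 1)"
      have e': "e' > 0" using e c0 by (simp add: e'_def)
      have cB: "continuous_on (UNIV \<times> B) (\<lambda>q. F (fst q) (snd q))"
        using continuous_on_subset[OF cont] by blast
      obtain X0 where X0: "p \<in> X0" "open X0"
        "\<forall>x\<in>X0 \<inter> UNIV. \<forall>t\<in>B. dist (F (fst (x, t)) (snd (x, t))) (F (fst (p, t)) (snd (p, t))) \<le> e'"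
        using continuous_on_prod_compactE[OF cB NB(3) _ e'] by blast
      have "dist (\<integral>y. F x y \<partial>M) (\<integral>y. F p y \<partial>M) < e" if x: "x \<in> X0 \<inter> N" for x
      proof -
        have "dist (\<integral>y. F x y \<partial>M) (\<integral>y. F p y \<partial>M) = norm (\<integral>y. F x y - F p y \<partial>M)"
          using intx[of x] intx[of p] x NB(2) by (simp add: dist_norm)
        also have "\<dots> \<le> (\<integral>y. norm (F x y - F p y) \<partial>M)" by (rule integral_norm_bound)
        also have "\<dots> \<le> (\<integral>y. e' * indicator B y \<partial>M)"
        proof (rule integral_mono_AE')
          show "integrable M (\<lambda>y. e' * indicator B y)" using iB by simp
          show "AE y in M. norm (F x y - F p y) \<le> e' * indicator B y"
            using z
          proof eventually_elim
            case (elim y)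
            show ?case
            proof (cases "y \<in> B")
              case True
              then show ?thesis using X0(3) x by (auto simp: dist_norm)
            next
              case False
              then show ?thesis using elim x NB(2) by auto
            qed
          qed
          show "AE y in M. 0 \<le> e' * indicator B y" using e' by auto
        qed
        also have "\<dots> = e' * c" using mB by simp
        also have "\<dots> < e" using e c0 by (simp add: e'_def field_simps)
        finally show ?thesis .
      qed
      then show "\<forall>\<^sub>F x in at p within UNIV. dist (\<integral>y. F x y \<partial>M) (\<integral>y. F p y \<partial>M) < e"
        unfolding eventually_at_topological
        by (intro exI[of _ "X0 \<inter> N"]) (use X0 NB in auto)
    qed
  qed
  then show ?thesis by (simp add: continuous_on_def)
qed



lemma finite_partition:
  assumes "finite T"
  shows "A \<subseteq> (\<Union>t\<in>T. X t) \<Longrightarrow> A \<in> sets M \<Longrightarrow> (\<forall>t\<in>T. X t \<in> sets M) \<Longrightarrow>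
    \<exists>D. (\<forall>t\<in>T. D t \<in> sets M \<and> D t \<subseteq> A \<inter> X t) \<and>
        (\<forall>s\<in>T. \<forall>t\<in>T. s \<noteq> t \<longrightarrow> D s \<inter> D t = {}) \<and> A = (\<Union>t\<in>T. D t)"
  using assms
proof (induction T arbitrary: A rule: finite_induct)
  case empty
  then show ?case by (intro exI[of _ "\<lambda>_. {}"]) auto
next
  case (insert t T)
  have h1: "A - X t \<subseteq> (\<Union>t\<in>T. X t)" using insert.prems(1) by blast
  have Xt: "X t \<in> sets M" using insert.prems(3) by simp
  have h2: "A - X t \<in> sets M" using insert.prems(2) Xt by (rule sets.Diff)
  have h3: "\<forall>s\<in>T. X s \<in> sets M" using insert.prems(3) by simp
  obtain D where DD: "(\<forall>s\<in>T. D s \<in> sets M \<and> D s \<subseteq> (A - X t) \<inter> X s) \<and>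
    (\<forall>s\<in>T. \<forall>r\<in>T. s \<noteq> r \<longrightarrow> D s \<inter> D r = {}) \<and> A - X t = (\<Union>s\<in>T. D s)"
    using insert.IH[OF h1 h2 h3] by (rule exE)
  note D = DD[THEN conjunct1] DD[THEN conjunct2, THEN conjunct1] DD[THEN conjunct2, THEN conjunct2]
  define D' where "D' = D(t := A \<inter> X t)"
  have Dt: "D' t = A \<inter> X t" by (simp add: D'_def)
  have Ds: "D' s = D s" if "s \<in> T" for s using that insert(2) by (auto simp: D'_def)
  have p1: "\<forall>s\<in>insert t T. D' s \<in> sets M \<and> D' s \<subseteq> A \<inter> X s"
  proof
    fix s assume "s \<in> insert t T"
    then show "D' s \<in> sets M \<and> D' s \<subseteq> A \<inter> X s"
    proof
      assume "s = t" then show ?thesis using Dt insert.prems by auto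
    next
      assume "s \<in> T" then show ?thesis using Ds D(1) by auto
    qed
  qed
  have p2: "\<forall>s\<in>insert t T. \<forall>r\<in>insert t T. s \<noteq> r \<longrightarrow> D' s \<inter> D' r = {}"
  proof (intro ballI impI)
    fix s r assume s: "s \<in> insert t T" and r: "r \<in> insert t T" and sr: "s \<noteq> r"
    have ts: "D' q \<inter> D' t = {}" if "q \<in> T" for q using Ds[OF that] Dt D(1) that by auto
    show "D' s \<inter> D' r = {}"
    proof (cases "s = t")
      case True
      then have "r \<in> T" using r sr by auto
      then show ?thesis using ts True by blast
    next
      case False
      then have sT: "s \<in> T" using s by auto
      show ?thesis
      proof (cases "r = t")
        case True then show ?thesis using ts[OF sT] by blast
      next
        case False
        then have "r \<in> T" using r by auto
        then show ?thesis using Ds sT D(2) sr by auto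
      qed
    qed
  qed
  have p3: "A = (\<Union>s\<in>insert t T. D' s)"
  proof -
    have e1: "(\<Union>s\<in>T. D' s) = (\<Union>s\<in>T. D s)" using Ds by auto
    have "A = (A \<inter> X t) \<union> (A - X t)" by blast
    also have "\<dots> = D' t \<union> (\<Union>s\<in>T. D' s)" using D(3) Dt e1 by simp
    also have "\<dots> = (\<Union>s\<in>insert t T. D' s)" by simp
    finally show ?thesis .
  qed
  show ?case by (rule exI[of _ D'], intro conjI; fact)
qed

lemma sum_indicator_single:
  fixes c :: "'t \<Rightarrow> 'b::real_vector"
  assumes "finite T" "t0 \<in> T" "x \<in> D t0" "\<forall>s\<in>T. \<forall>t\<in>T. s \<noteq> t \<longrightarrow> D s \<inter> D t = {}"
  shows "(\<Sum>t\<in>T. indicator (D t) x *\<^sub>R c t) = c t0"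
proof -
  have "(\<Sum>t\<in>T. indicator (D t) x *\<^sub>R c t) = indicator (D t0) x *\<^sub>R c t0 + (\<Sum>t\<in>T - {t0}. indicator (D t) x *\<^sub>R c t)"
    by (rule sum.remove[OF assms(1,2)])
  also have "(\<Sum>t\<in>T - {t0}. indicator (D t) x *\<^sub>R c t) = 0"
    using assms(2,3,4) by (intro sum.neutral) (auto simp: indicator_def)
  finally show ?thesis using assms(3) by simp
qed

lemma sum_indicator_none:
  fixes c :: "'t \<Rightarrow> 'b::real_vector"
  assumes "\<forall>t\<in>T. x \<notin> D t"
  shows "(\<Sum>t\<in>T. indicator (D t) x *\<^sub>R c t) = 0"
  using assms by (intro sum.neutral) (auto simp: indicator_def)

lemma eps_zero:
  fixes d :: complex
  assumes "\<And>e. e > 0 \<Longrightarrow> norm d \<le> e * c" "c \<ge> 0"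
  shows "d = 0"
proof (rule ccontr)
  assume "d \<noteq> 0"
  then have n: "norm d > 0" by simp
  define e where "e = norm d / (c + 1)"
  have "e > 0" using n assms(2) by (simp add: e_def)
  then have "norm d \<le> e * c" by (rule assms(1))
  moreover have "e * c < norm d" using n assms(2) by (simp add: e_def field_simps)
  ultimately show False by simp
qed

lemma fubini_cc:
  fixes F :: "'a::t2_space \<Rightarrow> 'b::t2_space \<Rightarrow> complex"
  assumes M1: "sets M1 = sets borel" and M2: "sets M2 = sets borel"
    and A: "compact A" and B: "compact B" and fA: "emeasure M1 A < \<infinity>" and fB: "emeasure M2 B < \<infinity>"
    and cont: "continuous_on UNIV (\<lambda>p. F (fst p) (snd p))"
    and zA: "AE x in M1. x \<notin> A \<longrightarrow> (\<forall>y. F x y = 0)"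
    and zB: "AE y in M2. y \<notin> B \<longrightarrow> (\<forall>x. F x y = 0)"
  shows "(\<integral>x. (\<integral>y. F x y \<partial>M2) \<partial>M1) = (\<integral>y. (\<integral>x. F x y \<partial>M1) \<partial>M2)"
proof -
  have sp1: "space M1 = UNIV" using sets_eq_imp_space_eq[OF M1] by simp
  have sp2: "space M2 = UNIV" using sets_eq_imp_space_eq[OF M2] by simp
  have cont': "continuous_on UNIV (\<lambda>p. F (snd p) (fst p))"
  proof -
    have "continuous_on UNIV ((\<lambda>p. F (fst p) (snd p)) \<circ> (\<lambda>p. (snd p, fst p)))"
      by (intro continuous_on_compose continuous_intros continuous_on_subset[OF cont]) auto
    then show ?thesis by (simp add: o_def)
  qed
  have cx: "continuous_on UNIV (F x)" for x
  proof -
    have "continuous_on UNIV ((\<lambda>p. F (fst p) (snd p)) \<circ> (\<lambda>y. (x, y)))"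
      by (intro continuous_on_compose continuous_intros continuous_on_subset[OF cont]) auto
    then show ?thesis by (simp add: o_def)
  qed
  have cy: "continuous_on UNIV (\<lambda>x. F x y)" for y
  proof -
    have "continuous_on UNIV ((\<lambda>p. F (fst p) (snd p)) \<circ> (\<lambda>x. (x, y)))"
      by (intro continuous_on_compose continuous_intros continuous_on_subset[OF cont]) auto
    then show ?thesis by (simp add: o_def)
  qed
  define g1 where "g1 x = (\<integral>y. F x y \<partial>M2)" for x
  define g2 where "g2 y = (\<integral>x. F x y \<partial>M1)" for y
  have cg1: "continuous_on UNIV g1" unfolding g1_def
    by (rule cont_param_integral[OF M2 cont]) (use B fB zB in \<open>intro exI[of _ UNIV] exI[of _ B], auto\<close>)
  have cg2: "continuous_on UNIV g2" unfolding g2_def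
    by (rule cont_param_integral[where F="\<lambda>y x. F x y", OF M1 cont'])
       (use A fA zA in \<open>intro exI[of _ UNIV] exI[of _ A], auto\<close>)
  have iF2: "integrable M2 (F x)" for x
    by (rule integrable_cont_cpt[OF M2 cx B fB]) (use zB in \<open>auto elim!: AE_mp\<close>)
  have iF1: "integrable M1 (\<lambda>x. F x y)" for y
    by (rule integrable_cont_cpt[OF M1 cy A fA]) (use zA in \<open>auto elim!: AE_mp\<close>)
  have zg1: "AE x in M1. x \<notin> A \<longrightarrow> g1 x = 0" using zA by eventually_elim (auto simp: g1_def)
  have zg2: "AE y in M2. y \<notin> B \<longrightarrow> g2 y = 0" using zB by eventually_elim (auto simp: g2_def)
  have ig1: "integrable M1 g1" by (rule integrable_cont_cpt[OF M1 cg1 A fA zg1])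
  have ig2: "integrable M2 g2" by (rule integrable_cont_cpt[OF M2 cg2 B fB zg2])
  define a where "a = measure M1 A"
  define b where "b = measure M2 B"
  have a0: "a \<ge> 0" and b0: "b \<ge> 0" by (auto simp: a_def b_def)
  have Ab: "A \<in> sets M1" using M1 compact_borel_t2[OF A] by simp
  have Bb: "B \<in> sets M2" using M2 compact_borel_t2[OF B] by simp
  have iA: "integrable M1 (indicator A :: 'a \<Rightarrow> real)"
    using Ab fA by (simp add: integrable_indicator_iff sets.Int_space_eq2)
  have iB: "integrable M2 (indicator B :: 'b \<Rightarrow> real)"
    using Bb fB by (simp add: integrable_indicator_iff sets.Int_space_eq2)
  have mA: "measure M1 (A \<inter> space M1) = a" by (simp add: a_def sp1)
  have mB: "measure M2 (B \<inter> space M2) = b" by (simp add: b_def sp2)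
  have main: "norm (integral\<^sup>L M1 g1 - integral\<^sup>L M2 g2) \<le> e * (2 * a * b)" if e: "e > 0" for e
  proof -
    have "\<forall>x0\<in>A. \<exists>X. x0 \<in> X \<and> open X \<and> (\<forall>x\<in>X. \<forall>t\<in>B. dist (F x t) (F x0 t) \<le> e)"
    proof
      fix x0 assume "x0 \<in> A"
      have cB: "continuous_on (UNIV \<times> B) (\<lambda>q. F (fst q) (snd q))"
        using continuous_on_subset[OF cont] by blast
      obtain X0 where "x0 \<in> X0" "open X0"
        "\<forall>x\<in>X0 \<inter> UNIV. \<forall>t\<in>B. dist (F (fst (x, t)) (snd (x, t))) (F (fst (x0, t)) (snd (x0, t))) \<le> e"
        using continuous_on_prod_compactE[OF cB B _ e] by blast
      then show "\<exists>X. x0 \<in> X \<and> open X \<and> (\<forall>x\<in>X. \<forall>t\<in>B. dist (F x t) (F x0 t) \<le> e)" by auto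
    qed
    then obtain X where X: "\<And>x0. x0 \<in> A \<Longrightarrow> x0 \<in> X x0 \<and> open (X x0) \<and> (\<forall>x\<in>X x0. \<forall>t\<in>B. dist (F x t) (F x0 t) \<le> e)"
      by metis
    obtain T where T: "T \<subseteq> A" "finite T" "A \<subseteq> (\<Union>t\<in>T. X t)"
      by (rule compactE_image[OF A, of A X]) (use X in auto)
    have XT: "\<forall>t\<in>T. X t \<in> sets M1" using X T(1) M1 by (auto simp: borel_open)
    obtain D where D: "\<forall>t\<in>T. D t \<in> sets M1 \<and> D t \<subseteq> A \<inter> X t"
        "\<forall>s\<in>T. \<forall>t\<in>T. s \<noteq> t \<longrightarrow> D s \<inter> D t = {}" "A = (\<Union>t\<in>T. D t)"
      using finite_partition[OF T(2) T(3) Ab XT] by blast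
    have iD: "integrable M1 (indicator (D t) :: 'a \<Rightarrow> real)" if "t \<in> T" for t
    proof -
      have "emeasure M1 (D t) \<le> emeasure M1 A" using D(1) that Ab by (intro emeasure_mono) auto
      then show ?thesis using D(1) that fA by (simp add: integrable_indicator_iff sets.Int_space_eq2)
    qed
    define S where "S = (\<Sum>t\<in>T. measure M1 (D t) *\<^sub>R g1 t)"
    have mD: "measure M1 (D t \<inter> space M1) = measure M1 (D t)" for t by (simp add: sp1)
    have c1: "norm (integral\<^sup>L M1 g1 - S) \<le> e * b * a"
    proof -
      define s where "s x = (\<Sum>t\<in>T. indicator (D t) x *\<^sub>R g1 t)" for x
      have isum: "integrable M1 s" unfolding s_def
        by (intro Bochner_Integration.integrable_sum integrable_scaleR_left iD) auto
      have "integral\<^sup>L M1 s = (\<Sum>t\<in>T. integral\<^sup>L M1 (\<lambda>x. indicator (D t) x *\<^sub>R g1 t))"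
        unfolding s_def by (rule Bochner_Integration.integral_sum) (auto intro!: iD)
      also have "\<dots> = S" unfolding S_def by (intro sum.cong refl) (simp add: iD mD)
      finally have "integral\<^sup>L M1 s = S" .
      then have "integral\<^sup>L M1 g1 - S = (\<integral>x. g1 x - s x \<partial>M1)"
        using ig1 isum by simp
      then have "norm (integral\<^sup>L M1 g1 - S) \<le> (\<integral>x. norm (g1 x - s x) \<partial>M1)"
        using integral_norm_bound by metis
      also have "\<dots> \<le> (\<integral>x. (e * b) * indicator A x \<partial>M1)"
      proof (rule integral_mono_AE')
        show "integrable M1 (\<lambda>x. (e * b) * indicator A x)" using iA by simp
        show "AE x in M1. 0 \<le> (e * b) * indicator A x" using e b0 by auto
        show "AE x in M1. norm (g1 x - s x) \<le> (e * b) * indicator A x"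
          using zg1
        proof eventually_elim
          case (elim x)
          show ?case
          proof (cases "x \<in> A")
            case True
            then obtain t0 where t0: "t0 \<in> T" "x \<in> D t0" using D(3) by blast
            have sx: "s x = g1 t0" unfolding s_def by (rule sum_indicator_single[OF T(2) t0 D(2)])
            have xX: "x \<in> X t0" using D(1) t0 by blast
            have "norm (g1 x - g1 t0) = norm (\<integral>y. F x y - F t0 y \<partial>M2)"
              unfolding g1_def using iF2 by simp
            also have "\<dots> \<le> (\<integral>y. norm (F x y - F t0 y) \<partial>M2)" by (rule integral_norm_bound)
            also have "\<dots> \<le> (\<integral>y. e * indicator B y \<partial>M2)"
            proof (rule integral_mono_AE')
              show "integrable M2 (\<lambda>y. e * indicator B y)" using iB by simp
              show "AE y in M2. 0 \<le> e * indicator B y" using e by auto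
              show "AE y in M2. norm (F x y - F t0 y) \<le> e * indicator B y"
                using zB
              proof eventually_elim
                case (elim y)
                then show ?case using X[of t0] T(1) t0 xX by (cases "y \<in> B") (auto simp: dist_norm)
              qed
            qed
            also have "\<dots> = e * b" using mB by simp
            finally show ?thesis using True sx by simp
          next
            case False
            then have "s x = 0" unfolding s_def using D by (intro sum_indicator_none) blast
            then show ?thesis using False elim by simp
          qed
        qed
      qed
      also have "\<dots> = e * b * a" using mA by simp
      finally show ?thesis .
    qed
    have c2: "norm (integral\<^sup>L M2 g2 - S) \<le> e * a * b"
    proof -
      define s where "s y = (\<Sum>t\<in>T. measure M1 (D t) *\<^sub>R F t y)" for y
      have isum: "integrable M2 s" unfolding s_def
        by (intro Bochner_Integration.integrable_sum integrable_scaleR_right iF2)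
      have "integral\<^sup>L M2 s = S" unfolding s_def S_def g1_def
        by (subst Bochner_Integration.integral_sum) (auto intro!: integrable_scaleR_right iF2)
      then have "integral\<^sup>L M2 g2 - S = (\<integral>y. g2 y - s y \<partial>M2)"
        using ig2 isum by simp
      then have "norm (integral\<^sup>L M2 g2 - S) \<le> (\<integral>y. norm (g2 y - s y) \<partial>M2)"
        using integral_norm_bound by metis
      also have "\<dots> \<le> (\<integral>y. (e * a) * indicator B y \<partial>M2)"
      proof (rule integral_mono_AE')
        show "integrable M2 (\<lambda>y. (e * a) * indicator B y)" using iB by simp
        show "AE y in M2. 0 \<le> (e * a) * indicator B y" using e a0 by auto
        show "AE y in M2. norm (g2 y - s y) \<le> (e * a) * indicator B y"
          using zB
        proof eventually_elim
          case (elim y)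
          show ?case
          proof (cases "y \<in> B")
            case True
            define r where "r x = (\<Sum>t\<in>T. indicator (D t) x *\<^sub>R F t y)" for x
            have ir: "integrable M1 r" unfolding r_def
              by (intro Bochner_Integration.integrable_sum integrable_scaleR_left iD) auto
            have "integral\<^sup>L M1 r = (\<Sum>t\<in>T. integral\<^sup>L M1 (\<lambda>x. indicator (D t) x *\<^sub>R F t y))"
              unfolding r_def by (rule Bochner_Integration.integral_sum) (auto intro!: iD)
            also have "\<dots> = s y" unfolding s_def by (intro sum.cong refl) (simp add: iD mD)
            finally have "integral\<^sup>L M1 r = s y" .
            then have "g2 y - s y = (\<integral>x. F x y - r x \<partial>M1)"
              unfolding g2_def using iF1 ir by simp
            then have "norm (g2 y - s y) \<le> (\<integral>x. norm (F x y - r x) \<partial>M1)"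
              using integral_norm_bound by metis
            also have "\<dots> \<le> (\<integral>x. e * indicator A x \<partial>M1)"
            proof (rule integral_mono_AE')
              show "integrable M1 (\<lambda>x. e * indicator A x)" using iA by simp
              show "AE x in M1. 0 \<le> e * indicator A x" using e by auto
              show "AE x in M1. norm (F x y - r x) \<le> e * indicator A x"
                using zA
              proof eventually_elim
                case (elim x)
                show ?case
                proof (cases "x \<in> A")
                  case xA: True
                  then obtain t0 where t0: "t0 \<in> T" "x \<in> D t0" using D(3) by blast
                  have rx: "r x = F t0 y" unfolding r_def by (rule sum_indicator_single[OF T(2) t0 D(2)])
                  have xX: "x \<in> X t0" using D(1) t0 by blast
                  show ?thesis using X[of t0] T(1) t0 xX True xA rx by (auto simp: dist_norm)
                next
                  case False
                  then have "r x = 0" unfolding r_def using D by (intro sum_indicator_none) blast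
                  then show ?thesis using False elim by simp
                qed
              qed
            qed
            also have "\<dots> = e * a" using mA by simp
            finally show ?thesis using True by simp
          next
            case False
            then have "s y = 0" "g2 y = 0" using elim by (auto simp: s_def g2_def)
            then show ?thesis using e a0 by simp
          qed
        qed
      qed
      also have "\<dots> = e * a * b" using mB by simp
      finally show ?thesis .
    qed
    have eq: "integral\<^sup>L M1 g1 - integral\<^sup>L M2 g2 = (integral\<^sup>L M1 g1 - S) - (integral\<^sup>L M2 g2 - S)"
      by simp
    have "norm (integral\<^sup>L M1 g1 - integral\<^sup>L M2 g2) \<le> norm (integral\<^sup>L M1 g1 - S) + norm (integral\<^sup>L M2 g2 - S)"
      unfolding eq by (rule norm_triangle_ineq4)
    then show ?thesis using c1 c2 by (simp add: algebra_simps)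
  qed
  have "integral\<^sup>L M1 g1 - integral\<^sup>L M2 g2 = 0"
    by (rule eps_zero[OF main]) (use a0 b0 in auto)
  then show ?thesis by (simp add: g1_def[abs_def] g2_def[abs_def])
qed



lemma haar_facts:
  assumes "left_haar_measure \<mu>"
  shows "sets \<mu> = sets borel" "\<And>g A. A \<in> sets borel \<Longrightarrow> emeasure \<mu> ((+) g ` A) = emeasure \<mu> A"
    "\<And>C. compact C \<Longrightarrow> emeasure \<mu> C < \<infinity>" "\<And>U. open U \<Longrightarrow> U \<noteq> {} \<Longrightarrow> emeasure \<mu> U > 0"
  using assms unfolding left_haar_measure_def by auto

lemma nu_facts:
  assumes "normalized_haar_on K \<nu>"
  shows "sets \<nu> = sets borel" "emeasure \<nu> K = 1" "emeasure \<nu> (- K) = 0"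
    "\<And>k A. k \<in> K \<Longrightarrow> A \<in> sets borel \<Longrightarrow> emeasure \<nu> ((+) k ` A) = emeasure \<nu> A"
  using assms unfolding normalized_haar_on_def by auto

lemma subgroup_facts:
  assumes "compact_subgroup K"
  shows "compact K" "0 \<in> K" "\<And>a b. a \<in> K \<Longrightarrow> b \<in> K \<Longrightarrow> a + b \<in> K" "\<And>a. a \<in> K \<Longrightarrow> - a \<in> K"
  using assms unfolding compact_subgroup_def by auto

lemma t2_Hausdorff: "Hausdorff_space (euclidean :: 'a::t2_space topology)"
  unfolding Hausdorff_space_def disjnt_def
proof (intro allI impI)
  fix x y :: 'a assume "x \<in> topspace euclidean \<and> y \<in> topspace euclidean \<and> x \<noteq> y"
  then have xy: "x \<noteq> y" by simp
  obtain U V where UV: "open U" "open V" "x \<in> U" "y \<in> V" "U \<inter> V = {}"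
    using t2_space_class.hausdorff[OF xy] by blast
  have "openin euclidean U" "openin euclidean V" using UV(1,2) open_openin by blast+
  then show "\<exists>U V. openin euclidean U \<and> openin euclidean V \<and> x \<in> U \<and> y \<in> V \<and> U \<inter> V = {}"
    using UV(3-5) by blast
qed

lemma compact_img_diff:
  fixes A B :: "'a::topological_group_add set"
  assumes "compact A" "compact B"
  shows "compact ((\<lambda>q. fst q + - snd q) ` (A \<times> B))" "compact ((\<lambda>q. fst q + snd q) ` (A \<times> B))"
    "compact (uminus ` A)"
proof -
  show "compact ((\<lambda>q. fst q + - snd q) ` (A \<times> B))"
    by (rule compact_continuous_image) (auto intro!: continuous_intros compact_Times assms)
  show "compact ((\<lambda>q. fst q + snd q) ` (A \<times> B))"
    by (rule compact_continuous_image) (auto intro!: continuous_intros compact_Times assms)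
  show "compact (uminus ` A)"
    by (rule compact_continuous_image) (auto intro!: continuous_intros assms)
qed

lemma pos_integral:
  fixes g :: "'a::{topological_group_add,t2_space} \<Rightarrow> real"
  assumes haar: "left_haar_measure \<mu>" and cg: "continuous_on UNIV g" and nn: "\<And>x. g x \<ge> 0"
    and C: "compact C" and z: "\<And>x. x \<notin> C \<Longrightarrow> g x = 0" and p: "g p > 0"
  shows "integral\<^sup>L \<mu> g > 0"
proof -
  note H = haar_facts[OF haar]
  have ig: "integrable \<mu> g"
    by (rule integrable_cont_cpt[OF H(1) cg C H(3)[OF C]]) (use z in auto)
  have "integral\<^sup>L \<mu> g \<ge> 0" using nn by (simp add: integral_nonneg)
  moreover have "integral\<^sup>L \<mu> g \<noteq> 0"
  proof
    assume "integral\<^sup>L \<mu> g = 0"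
    then have "AE x in \<mu>. g x = 0" using integral_nonneg_eq_0_iff_AE[OF ig] nn by simp
    then obtain N where N: "{x \<in> space \<mu>. \<not> g x = 0} \<subseteq> N" "emeasure \<mu> N = 0" "N \<in> sets \<mu>"
      by (rule AE_E)
    define U where "U = {x. 0 < g x}"
    have oU: "open U" unfolding U_def by (rule open_Collect_less) (auto intro: cg continuous_intros)
    have "U \<noteq> {}" using p by (auto simp: U_def)
    then have "emeasure \<mu> U > 0" using H(4) oU by blast
    moreover have "U \<subseteq> N" using N(1) sets_eq_imp_space_eq[OF H(1)] by (auto simp: U_def)
    then have "emeasure \<mu> U \<le> emeasure \<mu> N" using N(3) by (rule emeasure_mono)
    ultimately show False using N(2) by simp
  qed
  ultimately show ?thesis by simp
qed

lemma bump:
  assumes lc: "locally_compact_space (euclidean :: 'a::t2_space topology)"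
  shows "\<exists>\<phi>::'a \<Rightarrow> real. continuous_on UNIV \<phi> \<and> (\<forall>x. 0 \<le> \<phi> x) \<and> \<phi> p > 0 \<and>
           (\<exists>C. compact C \<and> (\<forall>x. x \<notin> C \<longrightarrow> \<phi> x = 0))"
proof -
  have "\<exists>U Kc. open U \<and> compact Kc \<and> p \<in> U \<and> U \<subseteq> Kc"
    using lc unfolding locally_compact_space_def by (simp; blast)
  then obtain U Kc where U: "open U" "compact Kc" "p \<in> U" "U \<subseteq> Kc" by blast
  have cr: "completely_regular_space (euclidean :: 'a topology)"
    by (rule locally_compact_regular_imp_completely_regular_space[OF lc]) (simp add: t2_Hausdorff)
  have "closedin euclidean (- U)" using U(1) closed_Compl closed_closedin by blast
  moreover have "p \<in> topspace euclidean - (- U)" using U(3) by simp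
  ultimately obtain f :: "'a \<Rightarrow> real" where f: "continuous_map euclidean (top_of_set {0..1}) f" "f p = 0" "f ` (- U) \<subseteq> {1}"
    using cr unfolding completely_regular_space_def by blast
  have fc: "continuous_on UNIV f" and fr: "\<And>x. f x \<in> {0..1}"
    using f(1) unfolding continuous_map_in_subtopology by auto
  show ?thesis
  proof (intro exI[of _ "\<lambda>x. 1 - f x"] conjI exI[of _ Kc])
    show "continuous_on UNIV (\<lambda>x. 1 - f x)" by (intro continuous_intros fc)
    show "\<forall>x. 0 \<le> 1 - f x" using fr by auto
    show "0 < 1 - f p" using f(2) by simp
    show "compact Kc" using U(2) by simp
    show "\<forall>x. x \<notin> Kc \<longrightarrow> 1 - f x = 0" using f(3) U(4) by auto
  qed
qed

lemma pos_on_compact: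
  assumes lc: "locally_compact_space (euclidean :: 'a::t2_space topology)" and S: "compact S"
  shows "\<exists>u::'a \<Rightarrow> real. continuous_on UNIV u \<and> (\<forall>x. 0 \<le> u x) \<and> (\<forall>x\<in>S. u x > 0) \<and>
           (\<exists>C. compact C \<and> (\<forall>x. x \<notin> C \<longrightarrow> u x = 0))"
proof -
  have ex1: "\<forall>p. \<exists>\<phi>::'a \<Rightarrow> real. continuous_on UNIV \<phi> \<and> (\<forall>x. 0 \<le> \<phi> x) \<and> \<phi> p > 0 \<and>
           (\<exists>C. compact C \<and> (\<forall>x. x \<notin> C \<longrightarrow> \<phi> x = 0))" using bump[OF lc] by blast
  obtain \<Phi> :: "'a \<Rightarrow> 'a \<Rightarrow> real" where \<Phi>: "\<And>p. continuous_on UNIV (\<Phi> p) \<and> (\<forall>x. 0 \<le> \<Phi> p x) \<and> \<Phi> p p > 0 \<and>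
           (\<exists>C. compact C \<and> (\<forall>x. x \<notin> C \<longrightarrow> \<Phi> p x = 0))"
    using choice[OF ex1] by blast
  then have ex2: "\<forall>p. \<exists>C. compact C \<and> (\<forall>x. x \<notin> C \<longrightarrow> \<Phi> p x = 0)" by blast
  obtain CC where CC: "\<And>p. compact (CC p) \<and> (\<forall>x. x \<notin> CC p \<longrightarrow> \<Phi> p x = 0)"
    using choice[OF ex2] by blast
  have op: "open {x. 0 < \<Phi> p x}" for p
    by (rule open_Collect_less) (use \<Phi> in \<open>auto intro: continuous_intros\<close>)
  obtain T where T: "T \<subseteq> S" "finite T" "S \<subseteq> (\<Union>p\<in>T. {x. 0 < \<Phi> p x})"
    by (rule compactE_image[OF S, of S "\<lambda>p. {x. 0 < \<Phi> p x}"]) (use op \<Phi> in auto)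
  show ?thesis
  proof (intro exI[of _ "\<lambda>x. \<Sum>p\<in>T. \<Phi> p x"] conjI exI[of _ "\<Union>p\<in>T. CC p"])
    show "continuous_on UNIV (\<lambda>x. \<Sum>p\<in>T. \<Phi> p x)" by (intro continuous_on_sum) (use \<Phi> in auto)
    show "\<forall>x. 0 \<le> (\<Sum>p\<in>T. \<Phi> p x)" using \<Phi> by (simp add: sum_nonneg)
    show "\<forall>x\<in>S. 0 < (\<Sum>p\<in>T. \<Phi> p x)"
    proof
      fix x assume "x \<in> S"
      then obtain p where "p \<in> T" "0 < \<Phi> p x" using T(3) by blast
      then show "0 < (\<Sum>p\<in>T. \<Phi> p x)" using T(2) \<Phi> by (intro sum_pos2) auto
    qed
    show "compact (\<Union>p\<in>T. CC p)" using T(2) CC by (intro compact_UN) auto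
    show "\<forall>x. x \<notin> (\<Union>p\<in>T. CC p) \<longrightarrow> (\<Sum>p\<in>T. \<Phi> p x) = 0" using CC by (auto intro!: sum.neutral)
  qed
qed



lemma cont_comp: "continuous_on UNIV a \<Longrightarrow> continuous_on UNIV f \<Longrightarrow> continuous_on UNIV (\<lambda>x. a (f x))"
  by (rule continuous_on_compose2[of UNIV a UNIV f]) auto

lemma lc_nbhd:
  fixes p :: "'a::topological_space"
  assumes lc: "locally_compact_space (euclidean :: 'a topology)"
  shows "\<exists>U Kc. open U \<and> compact Kc \<and> p \<in> U \<and> U \<subseteq> Kc"
proof -
  have "p \<in> topspace euclidean" by simp
  from lc[unfolded locally_compact_space_def, rule_format, OF this]
  obtain U K where UK: "openin euclidean U" "compactin euclidean K" "p \<in> U" "U \<subseteq> K" by blast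
  have "open U" using UK(1) open_openin by blast
  moreover have "compact K" using UK(2) compactin_euclidean_iff by blast
  ultimately show ?thesis using UK(3,4) by blast
qed

lemma nu_AE:
  fixes K :: "'a::{topological_group_add,t2_space} set"
  assumes "normalized_haar_on K \<nu>" "compact_subgroup K"
  shows "AE k in \<nu>. k \<in> K"
proof (rule AE_I'[of "- K"])
  note N = nu_facts[OF assms(1)]
  have "closed K" using subgroup_facts(1)[OF assms(2)] by (rule compact_imp_closed)
  then have "- K \<in> sets \<nu>" using N(1) by (simp add: borel_open open_Compl)
  then show "- K \<in> null_sets \<nu>" using N(3) by (simp add: null_sets_def)
qed auto

lemma ident:
  fixes a b :: "'a::{topological_group_add,t2_space} \<Rightarrow> complex"
  assumes haar: "left_haar_measure \<mu>"
    and ca: "continuous_on UNIV a" and Ca: "compact Ca" and za: "\<forall>x. x \<notin> Ca \<longrightarrow> a x = 0"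
    and cb: "continuous_on UNIV b" and Cb: "compact Cb" and zb: "\<forall>x. x \<notin> Cb \<longrightarrow> b x = 0"
  shows "(\<integral>y. a (-y) * (\<integral>x. b (x + y) \<partial>\<mu>) \<partial>\<mu>) = integral\<^sup>L \<mu> a * integral\<^sup>L \<mu> b"
proof -
  note H = haar_facts[OF haar]
  have Hinv: "\<forall>A\<in>sets borel. emeasure \<mu> ((+) g ` A) = emeasure \<mu> A" for g using H(2) by blast
  define A1 where "A1 = uminus ` Ca"
  define B1 where "B1 = (\<lambda>q. fst q + snd q) ` (Cb \<times> Ca)"
  have cA1: "compact A1" "compact B1" unfolding A1_def B1_def
    by (rule compact_img_diff(3)[OF Ca Cb], rule compact_img_diff(2)[OF Cb Ca])
  have "(\<integral>y. a (-y) * (\<integral>x. b (x + y) \<partial>\<mu>) \<partial>\<mu>) = (\<integral>y. (\<integral>x. a (-y) * b (x + y) \<partial>\<mu>) \<partial>\<mu>)"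
    by (simp only: integral_mult_right_zero)
  also have "\<dots> = (\<integral>x. (\<integral>y. a (-y) * b (x + y) \<partial>\<mu>) \<partial>\<mu>)"
  proof (rule fubini_cc[where F="\<lambda>y x. a (-y) * b (x + y)", OF H(1) H(1) cA1(1) cA1(2) H(3)[OF cA1(1)] H(3)[OF cA1(2)]])
    show "continuous_on UNIV (\<lambda>p. a (- fst p) * b (snd p + fst p))"
      by (rule continuous_on_mult; rule cont_comp[OF ca] cont_comp[OF cb]; intro continuous_intros)
    show "AE y in \<mu>. y \<notin> A1 \<longrightarrow> (\<forall>x. a (- y) * b (x + y) = 0)"
    proof (rule AE_I2, intro impI allI)
      fix y x assume "y \<notin> A1"
      have "-y \<notin> Ca"
      proof
        assume "-y \<in> Ca"
        then have "- (- y) \<in> A1" unfolding A1_def by (rule imageI)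
        then show False using \<open>y \<notin> A1\<close> by simp
      qed
      then show "a (- y) * b (x + y) = 0" using za by simp
    qed
    show "AE x in \<mu>. x \<notin> B1 \<longrightarrow> (\<forall>y. a (- y) * b (x + y) = 0)"
    proof (rule AE_I2, intro impI allI)
      fix x y assume x: "x \<notin> B1"
      show "a (- y) * b (x + y) = 0"
      proof (rule ccontr)
        assume "a (- y) * b (x + y) \<noteq> 0"
        then have "-y \<in> Ca" "x + y \<in> Cb" using za zb by auto
        then have "(x + y) + (-y) \<in> B1" unfolding B1_def by (intro image_eqI[of _ _ "(x+y, -y)"]) auto
        then show False using x by (simp add: add.assoc)
      qed
    qed
  qed
  also have "\<dots> = (\<integral>x. (\<integral>y. a (-y + x) * b y \<partial>\<mu>) \<partial>\<mu>)"
  proof (rule Bochner_Integration.integral_cong[OF refl])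
    fix x
    have c: "continuous_on UNIV (\<lambda>y. a (-y) * b (x + y))"
      by (rule continuous_on_mult; rule cont_comp[OF ca] cont_comp[OF cb]; intro continuous_intros)
    have "(\<integral>y. a (-y) * b (x + y) \<partial>\<mu>) = (\<integral>y. a (-(-x + y)) * b (x + (-x + y)) \<partial>\<mu>)"
      using integral_translate[OF H(1) Hinv c, of "-x"] by simp
    also have "\<dots> = (\<integral>y. a (-y + x) * b y \<partial>\<mu>)" by (simp add: minus_add add_minus_cancel)
    finally show "(\<integral>y. a (-y) * b (x + y) \<partial>\<mu>) = (\<integral>y. a (-y + x) * b y \<partial>\<mu>)" .
  qed
  also have "\<dots> = (\<integral>y. (\<integral>x. a (-y + x) * b y \<partial>\<mu>) \<partial>\<mu>)"
  proof (rule fubini_cc[where F="\<lambda>x y. a (-y + x) * b y", OF H(1) H(1) cA1(2) Cb H(3)[OF cA1(2)] H(3)[OF Cb]])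
    show "continuous_on UNIV (\<lambda>p. a (- snd p + fst p) * b (snd p))"
      by (rule continuous_on_mult; rule cont_comp[OF ca] cont_comp[OF cb]; intro continuous_intros)
    show "AE x in \<mu>. x \<notin> B1 \<longrightarrow> (\<forall>y. a (- y + x) * b y = 0)"
    proof (rule AE_I2, intro impI allI)
      fix x y assume x: "x \<notin> B1"
      show "a (- y + x) * b y = 0"
      proof (rule ccontr)
        assume "a (- y + x) * b y \<noteq> 0"
        then have "-y + x \<in> Ca" "y \<in> Cb" using za zb by auto
        then have "y + (-y + x) \<in> B1" unfolding B1_def by (intro image_eqI[of _ _ "(y, -y + x)"]) auto
        then show False using x by (simp add: add_minus_cancel)
      qed
    qed
    show "AE y in \<mu>. y \<notin> Cb \<longrightarrow> (\<forall>x. a (- y + x) * b y = 0)" using zb by simp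
  qed
  also have "\<dots> = (\<integral>y. integral\<^sup>L \<mu> a * b y \<partial>\<mu>)"
  proof (rule Bochner_Integration.integral_cong[OF refl])
    fix y
    have "(\<integral>x. a (-y + x) * b y \<partial>\<mu>) = (\<integral>x. a (-y + x) \<partial>\<mu>) * b y"
      by (simp only: integral_mult_left_zero)
    also have "(\<integral>x. a (-y + x) \<partial>\<mu>) = integral\<^sup>L \<mu> a"
      by (rule integral_translate[OF H(1) Hinv ca])
    finally show "(\<integral>x. a (-y + x) * b y \<partial>\<mu>) = integral\<^sup>L \<mu> a * b y" .
  qed
  also have "\<dots> = integral\<^sup>L \<mu> a * integral\<^sup>L \<mu> b" by (simp only: integral_mult_right_zero)
  finally show ?thesis .
qed

lemma rho_cont:
  fixes G :: "'a::{topological_group_add,t2_space} \<Rightarrow> 'c::{banach, second_countable_topology}"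
  assumes lc: "locally_compact_space (euclidean :: 'a topology)" and haar: "left_haar_measure \<mu>"
    and cG: "continuous_on UNIV G" and CG: "compact CG" and zG: "\<forall>x. x \<notin> CG \<longrightarrow> G x = 0"
  shows "continuous_on UNIV (\<lambda>y. \<integral>x. G (x + y) \<partial>\<mu>)"
proof -
  note H = haar_facts[OF haar]
  show ?thesis
  proof (rule cont_param_integral[where F="\<lambda>y x. G (x + y)", OF H(1)])
    show "continuous_on UNIV (\<lambda>p. G (snd p + fst p))"
      by (rule cont_comp[OF cG]) (intro continuous_intros)
    fix p
    obtain U Kc :: "'a set" where U: "open U" "compact Kc" "p \<in> U" "U \<subseteq> Kc" using lc_nbhd[OF lc] by blast
    define B where "B = (\<lambda>q. fst q + - snd q) ` (CG \<times> Kc)"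
    have cB: "compact B" unfolding B_def using compact_img_diff[OF CG U(2)] by simp
    have "AE y in \<mu>. y \<notin> B \<longrightarrow> (\<forall>x\<in>U. G (y + x) = 0)"
    proof (rule AE_I2, intro impI ballI)
      fix y x assume y: "y \<notin> B" and x: "x \<in> U"
      show "G (y + x) = 0"
      proof (rule ccontr)
        assume "G (y + x) \<noteq> 0"
        then have "y + x \<in> CG" using zG by auto
        then have "(y + x) + - x \<in> B" unfolding B_def using x U(4)
          by (intro image_eqI[of _ _ "(y + x, x)"]) auto
        then show False using y by (simp add: add.assoc)
      qed
    qed
    note AEf = this
    show "\<exists>N B. open N \<and> p \<in> N \<and> compact B \<and> emeasure \<mu> B < \<infinity> \<and>
                 (AE y in \<mu>. y \<notin> B \<longrightarrow> (\<forall>x\<in>N. G (y + x) = 0))"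
      apply (rule exI[of _ U], rule exI[of _ B])
      using U(1,3) cB H(3)[OF cB] AEf by simp
  qed
qed



lemma exists_b0:
  fixes \<mu> \<nu> :: "'a::{topological_group_add, t2_space} measure" and K :: "'a set"
  assumes lc: "locally_compact_space (euclidean :: 'a topology)" and haar: "left_haar_measure \<mu>"
    and K: "compact_subgroup K" and nu: "normalized_haar_on K \<nu>"
  shows "\<exists>b0::'a \<Rightarrow> complex. continuous_on UNIV b0 \<and> (\<exists>C. compact C \<and> (\<forall>x. x \<notin> C \<longrightarrow> b0 x = 0)) \<and>
           (\<forall>z. \<forall>k\<in>K. b0 (z + k) = b0 z) \<and> integral\<^sup>L \<mu> b0 \<noteq> 0"
proof -
  note H = haar_facts[OF haar]
  note N = nu_facts[OF nu]
  note S = subgroup_facts[OF K]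
  have AEK: "AE k in \<nu>. k \<in> K" by (rule nu_AE[OF nu K])
  have finK: "emeasure \<nu> K < \<infinity>" using N(2) by simp
  obtain u :: "'a \<Rightarrow> real" and Cu where uc: "continuous_on UNIV u" and un: "\<And>x. 0 \<le> u x"
    and up: "\<And>x. x \<in> K \<Longrightarrow> u x > 0" and Cu: "compact Cu" and zu: "\<And>x. x \<notin> Cu \<Longrightarrow> u x = 0"
    using pos_on_compact[OF lc S(1)] by blast
  define br where "br z = (\<integral>k. u (z + k) \<partial>\<nu>)" for z
  have cbr: "continuous_on UNIV br" unfolding br_def
  proof (rule cont_param_integral[where F="\<lambda>z k. u (z + k)", OF N(1)])
    show "continuous_on UNIV (\<lambda>p. u (fst p + snd p))"
      by (rule cont_comp[OF uc]) (intro continuous_intros)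
    fix p :: 'a
    have "AE y in \<nu>. y \<notin> K \<longrightarrow> (\<forall>x\<in>UNIV. u (x + y) = 0)" using AEK by eventually_elim simp
    then show "\<exists>N B. open N \<and> p \<in> N \<and> compact B \<and> emeasure \<nu> B < \<infinity> \<and>
        (AE y in \<nu>. y \<notin> B \<longrightarrow> (\<forall>x\<in>N. u (x + y) = 0))"
      apply (rule_tac exI[of _ UNIV], rule_tac exI[of _ K])
      using S(1) finK by simp
  qed
  have brinv: "br (z + k0) = br z" if k0: "k0 \<in> K" for z k0
  proof -
    have inv: "\<forall>A\<in>sets borel. emeasure \<nu> ((+) k0 ` A) = emeasure \<nu> A" using N(4)[OF k0] by blast
    have c: "continuous_on UNIV (\<lambda>w. u (z + w))" by (rule cont_comp[OF uc]) (intro continuous_intros)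
    have "br (z + k0) = (\<integral>k. u (z + (k0 + k)) \<partial>\<nu>)" unfolding br_def by (simp add: add.assoc)
    also have "\<dots> = (\<integral>k. u (z + k) \<partial>\<nu>)" by (rule integral_translate[OF N(1) inv c])
    finally show ?thesis unfolding br_def .
  qed
  define CB where "CB = (\<lambda>q. fst q + - snd q) ` (Cu \<times> K)"
  have cCB: "compact CB" unfolding CB_def by (rule compact_img_diff(1)[OF Cu S(1)])
  have zbr: "br z = 0" if z: "z \<notin> CB" for z
  proof -
    have "AE k in \<nu>. u (z + k) = 0"
      using AEK
    proof eventually_elim
      case (elim k)
      show ?case
      proof (rule ccontr)
        assume "u (z + k) \<noteq> 0"
        then have "z + k \<in> Cu" using zu by blast
        then have "(z + k) + - k \<in> CB" unfolding CB_def using elim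
          by (intro image_eqI[of _ _ "(z + k, k)"]) auto
        then show False using z by (simp add: add.assoc)
      qed
    qed
    then show ?thesis unfolding br_def by (rule integral_eq_zero_AE)
  qed
  have brn: "br z \<ge> 0" for z unfolding br_def using un by (simp add: integral_nonneg)
  have br0: "br 0 > 0"
  proof -
    have iu: "integrable \<nu> u"
    proof (rule integrable_cont_cpt[OF N(1) uc S(1) finK])
      show "AE x in \<nu>. x \<notin> K \<longrightarrow> u x = 0" using AEK by eventually_elim simp
    qed
    have "integral\<^sup>L \<nu> u \<noteq> 0"
    proof
      assume "integral\<^sup>L \<nu> u = 0"
      then have "AE k in \<nu>. u k = 0" using integral_nonneg_eq_0_iff_AE[OF iu] un by simp
      with AEK have "AE k in \<nu>. False"
      proof eventually_elim
        case (elim k)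
        then show ?case using up[of k] by simp
      qed
      then obtain NN where NN: "{x \<in> space \<nu>. \<not> False} \<subseteq> NN" "emeasure \<nu> NN = 0" "NN \<in> sets \<nu>"
        by (rule AE_E)
      have "K \<subseteq> NN" using NN(1) sets_eq_imp_space_eq[OF N(1)] by auto
      then have "emeasure \<nu> K \<le> emeasure \<nu> NN" using NN(3) by (rule emeasure_mono)
      then show False using NN(2) N(2) by simp
    qed
    moreover have "integral\<^sup>L \<nu> u \<ge> 0" using un by (simp add: integral_nonneg)
    ultimately show ?thesis unfolding br_def by simp
  qed
  have Ipos: "integral\<^sup>L \<mu> br > 0"
    by (rule pos_integral[OF haar cbr brn cCB zbr br0])
  show ?thesis
  proof (intro exI[of _ "\<lambda>z. complex_of_real (br z)"] conjI exI[of _ CB])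
    show "continuous_on UNIV (\<lambda>z. complex_of_real (br z))" by (intro continuous_intros cbr)
    show "compact CB" by (rule cCB)
    show "\<forall>x. x \<notin> CB \<longrightarrow> complex_of_real (br x) = 0" using zbr by simp
    show "\<forall>z. \<forall>k\<in>K. complex_of_real (br (z + k)) = complex_of_real (br z)" using brinv by simp
    show "(\<integral>z. complex_of_real (br z) \<partial>\<mu>) \<noteq> 0" using Ipos by simp
  qed
qed

lemma right_inv:
  fixes \<mu> \<nu> :: "'a::{topological_group_add, t2_space} measure" and K :: "'a set"
    and G :: "'a \<Rightarrow> complex"
  assumes lc: "locally_compact_space (euclidean :: 'a topology)" and haar: "left_haar_measure \<mu>"
    and K: "compact_subgroup K" and nu: "normalized_haar_on K \<nu>"
    and cG: "continuous_on UNIV G" and CG: "compact CG" and zG: "\<forall>x. x \<notin> CG \<longrightarrow> G x = 0"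
    and k: "k \<in> K"
  shows "(\<integral>z. G (z + k) \<partial>\<mu>) = integral\<^sup>L \<mu> G"
proof -
  note H = haar_facts[OF haar]
  obtain b0 :: "'a \<Rightarrow> complex" where cb: "continuous_on UNIV b0" and Cb: "\<exists>C. compact C \<and> (\<forall>x. x \<notin> C \<longrightarrow> b0 x = 0)"
    and binv: "\<forall>z. \<forall>k\<in>K. b0 (z + k) = b0 z" and bI: "integral\<^sup>L \<mu> b0 \<noteq> 0"
    using exists_b0[OF lc haar K nu] by blast
  obtain Cb0 where Cb0: "compact Cb0" "\<forall>x. x \<notin> Cb0 \<longrightarrow> b0 x = 0" using Cb by blast
  define rG where "rG y = (\<integral>x. G (x + y) \<partial>\<mu>)" for y
  define rb where "rb y = (\<integral>x. b0 (x + y) \<partial>\<mu>)" for y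
  define D where "D y = rG y * integral\<^sup>L \<mu> b0 - rb y * integral\<^sup>L \<mu> G" for y
  have crG: "continuous_on UNIV rG" unfolding rG_def[abs_def] by (rule rho_cont[OF lc haar cG CG zG])
  have crb: "continuous_on UNIV rb" unfolding rb_def[abs_def] by (rule rho_cont[OF lc haar cb Cb0])
  have cD: "continuous_on UNIV D" unfolding D_def[abs_def] by (intro continuous_intros crG crb)
  have Dzero: "(\<integral>y. a (-y) * D y \<partial>\<mu>) = 0"
    if ca: "continuous_on UNIV a" and Ca: "compact Ca" and za: "\<forall>x. x \<notin> Ca \<longrightarrow> a x = 0" for a Ca
  proof -
    have ca': "continuous_on UNIV (\<lambda>y. a (- y))" by (rule cont_comp[OF ca]) (intro continuous_intros)
    have cmpA: "compact (uminus ` Ca)" by (rule compact_img_diff(3)[OF Ca Ca])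
    have zA: "AE y in \<mu>. y \<notin> uminus ` Ca \<longrightarrow> a (- y) * r y = 0" for r :: "'a \<Rightarrow> complex"
    proof (rule AE_I2, rule impI)
      fix y assume y: "y \<notin> uminus ` Ca"
      have "-y \<notin> Ca"
      proof
        assume "-y \<in> Ca"
        then have "- (- y) \<in> uminus ` Ca" by (rule imageI)
        then show False using y by simp
      qed
      then show "a (- y) * r y = 0" using za by simp
    qed
    have i1: "integrable \<mu> (\<lambda>y. a (- y) * rG y)"
      by (rule integrable_cont_cpt[OF H(1) _ cmpA H(3)[OF cmpA] zA]) (intro continuous_intros ca' crG)
    have i2: "integrable \<mu> (\<lambda>y. a (- y) * rb y)"
      by (rule integrable_cont_cpt[OF H(1) _ cmpA H(3)[OF cmpA] zA]) (intro continuous_intros ca' crb)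
    have "(\<integral>y. a (-y) * D y \<partial>\<mu>) =
          (\<integral>y. (a (- y) * rG y) * integral\<^sup>L \<mu> b0 - (a (- y) * rb y) * integral\<^sup>L \<mu> G \<partial>\<mu>)"
      unfolding D_def by (simp add: algebra_simps)
    also have "\<dots> = (\<integral>y. a (- y) * rG y \<partial>\<mu>) * integral\<^sup>L \<mu> b0 - (\<integral>y. a (- y) * rb y \<partial>\<mu>) * integral\<^sup>L \<mu> G"
      using i1 i2 by simp
    also have "\<dots> = (integral\<^sup>L \<mu> a * integral\<^sup>L \<mu> G) * integral\<^sup>L \<mu> b0 - (integral\<^sup>L \<mu> a * integral\<^sup>L \<mu> b0) * integral\<^sup>L \<mu> G"
      unfolding rG_def rb_def
      using ident[OF haar ca Ca za cG CG zG] ident[OF haar ca Ca za cb Cb0] by simp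
    also have "\<dots> = 0" by (simp add: algebra_simps)
    finally show ?thesis .
  qed
  have Dk: "D k = 0"
  proof (rule ccontr)
    assume Dk: "D k \<noteq> 0"
    obtain \<phi> :: "'a \<Rightarrow> real" where c\<phi>: "continuous_on UNIV \<phi>" and n\<phi>: "\<forall>x. 0 \<le> \<phi> x"
      and p\<phi>: "\<phi> (- k) > 0" and C\<phi>: "\<exists>C. compact C \<and> (\<forall>x. x \<notin> C \<longrightarrow> \<phi> x = 0)"
      using bump[OF lc, of "- k"] by blast
    obtain Cp where Cp: "compact Cp" "\<forall>x. x \<notin> Cp \<longrightarrow> \<phi> x = 0" using C\<phi> by blast
    define a where "a x = cnj (D (- x)) * complex_of_real (\<phi> x)" for x
    have ca: "continuous_on UNIV a" unfolding a_def[abs_def]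
      by (intro continuous_intros c\<phi> cont_comp[OF cD])
    have za: "\<forall>x. x \<notin> Cp \<longrightarrow> a x = 0" using Cp(2) by (simp add: a_def)
    define q where "q y = (cmod (D y))\<^sup>2 * \<phi> (- y)" for y
    have "(\<integral>y. a (-y) * D y \<partial>\<mu>) = (\<integral>y. complex_of_real (q y) \<partial>\<mu>)"
    proof (rule Bochner_Integration.integral_cong[OF refl])
      fix y
      have "cnj (D y) * D y = complex_of_real ((cmod (D y))\<^sup>2)"
        unfolding complex_norm_square by (rule mult.commute)
      then show "a (-y) * D y = complex_of_real (q y)"
        unfolding a_def q_def by (simp add: algebra_simps)
    qed
    then have "complex_of_real (integral\<^sup>L \<mu> q) = 0" using Dzero[OF ca Cp(1) za] by simp
    then have q0: "integral\<^sup>L \<mu> q = 0" by simp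
    have cq: "continuous_on UNIV q" unfolding q_def[abs_def]
      by (intro continuous_intros cont_comp[OF cD] cont_comp[OF c\<phi>])
    have nq: "\<And>y. q y \<ge> 0" using n\<phi> by (simp add: q_def)
    have cmpq: "compact (uminus ` Cp)" by (rule compact_img_diff(3)[OF Cp(1) Cp(1)])
    have zq: "\<And>y. y \<notin> uminus ` Cp \<Longrightarrow> q y = 0"
    proof -
      fix y assume y: "y \<notin> uminus ` Cp"
      have "-y \<notin> Cp"
      proof
        assume "-y \<in> Cp"
        then have "- (- y) \<in> uminus ` Cp" by (rule imageI)
        then show False using y by simp
      qed
      then show "q y = 0" using Cp(2) by (simp add: q_def)
    qed
    have "q k > 0" using Dk p\<phi> by (simp add: q_def)
    then have "integral\<^sup>L \<mu> q > 0" using pos_integral[OF haar cq nq cmpq zq] by blast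
    then show False using q0 by simp
  qed
  have "rb k = integral\<^sup>L \<mu> b0" unfolding rb_def using binv k by simp
  then have "rG k * integral\<^sup>L \<mu> b0 = integral\<^sup>L \<mu> b0 * integral\<^sup>L \<mu> G" using Dk by (simp add: D_def)
  then have "rG k = integral\<^sup>L \<mu> G" using bI by simp
  then show ?thesis by (simp add: rG_def)
qed



theorem mainTheorem1:
  fixes \<mu> \<nu> :: "'a::{topological_group_add, t2_space} measure"
    and K :: "'a set" and \<omega> :: "'a \<Rightarrow> real"
  assumes "locally_compact_space (euclidean :: 'a topology)"
    and "left_haar_measure \<mu>"
    and "compact_subgroup K"
    and "normalized_haar_on K \<nu>"
    and "weight \<omega>" and "bi_invariant K \<omega>"
    and "f \<in> Cc_bi K" and "h \<in> Cc"
  shows "sharp \<nu> (wconv \<mu> \<omega> h f) = wconv \<mu> \<omega> (sharp \<nu> h) f"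
proof -
  note lc = assms(1) and haar = assms(2) and Ksg = assms(3) and nu = assms(4)
  note H = haar_facts[OF haar]
  note N = nu_facts[OF nu]
  note S = subgroup_facts[OF Ksg]
  have AEK: "AE k in \<nu>. k \<in> K" by (rule nu_AE[OF nu Ksg])
  have Hinv: "\<And>g. \<forall>A\<in>sets borel. emeasure \<mu> ((+) g ` A) = emeasure \<mu> A" using H(2) by blast
  have finK: "emeasure \<nu> K < \<infinity>" using N(2) by simp
  have spn: "space \<nu> = UNIV" using sets_eq_imp_space_eq[OF N(1)] by simp
  have m\<nu>: "measure \<nu> (space \<nu>) = 1"
  proof -
    have Kb: "K \<in> sets \<nu>" using N(1) compact_borel_t2[OF S(1)] by simp
    have nKb: "- K \<in> sets \<nu>" using sets.compl_sets[OF Kb] spn by (simp add: Compl_eq_Diff_UNIV)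
    have "emeasure \<nu> UNIV = emeasure \<nu> (K \<union> - K)" by simp
    also have "\<dots> = emeasure \<nu> K + emeasure \<nu> (- K)" by (rule plus_emeasure[symmetric]) (use Kb nKb in auto)
    also have "\<dots> = 1" using N(2,3) by simp
    finally show ?thesis using spn by (simp add: measure_def)
  qed
  have cnst: "\<And>c::complex. (\<integral>k. c \<partial>\<nu>) = c" using m\<nu> by simp
  have cf: "continuous_on UNIV f" and Cf: "compact (closure {x. f x \<noteq> 0})" and fb: "bi_invariant K f"
    using assms(7) unfolding Cc_bi_def Cc_def by auto
  have ch: "continuous_on UNIV h" and Ch: "compact (closure {x. h x \<noteq> 0})"
    using assms(8) unfolding Cc_def by auto
  define Cf' where "Cf' = closure {x. f x \<noteq> 0}"
  define Ch' where "Ch' = closure {x. h x \<noteq> 0}"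
  have cCf: "compact Cf'" using Cf by (simp add: Cf'_def)
  have cCh: "compact Ch'" using Ch by (simp add: Ch'_def)
  have zf: "\<And>x. x \<notin> Cf' \<Longrightarrow> f x = 0" using closure_subset[of "{x. f x \<noteq> 0}"] unfolding Cf'_def by blast
  have zh: "\<And>x. x \<notin> Ch' \<Longrightarrow> h x = 0" using closure_subset[of "{x. h x \<noteq> 0}"] unfolding Ch'_def by blast
  have c\<omega>: "continuous_on UNIV \<omega>" and \<omega>pos: "\<And>x. \<omega> x > 0" using assms(5) unfolding weight_def by auto
  have \<omega>ne: "\<And>x. \<omega> x \<noteq> 0" using \<omega>pos by (metis less_irrefl)
  have fR: "\<And>a k. k \<in> K \<Longrightarrow> f (a + k) = f a"
    using fb S(2) unfolding bi_invariant_def by (metis add_0)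
  have fL: "\<And>a k. k \<in> K \<Longrightarrow> f (k + a) = f a"
    using fb S(2) unfolding bi_invariant_def by (metis add_0_right)
  have \<omega>R: "\<And>a k. k \<in> K \<Longrightarrow> \<omega> (a + k) = \<omega> a"
    using assms(6) S(2) unfolding bi_invariant_def by (metis add_0)
  have \<omega>L: "\<And>a k. k \<in> K \<Longrightarrow> \<omega> (k + a) = \<omega> a"
    using assms(6) S(2) unfolding bi_invariant_def by (metis add_0_right)
  have cInt: "continuous_on UNIV (\<lambda>p. h (snd p) * f (- snd p + fst p) *
                 complex_of_real (\<omega> (snd p) * \<omega> (- snd p + fst p) / \<omega> (fst p)))"
  proof -
    have c1: "continuous_on UNIV (\<lambda>p::'a\<times>'a. h (snd p))" by (rule cont_comp[OF ch]) (intro continuous_intros)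
    have c2: "continuous_on UNIV (\<lambda>p::'a\<times>'a. f (- snd p + fst p))" by (rule cont_comp[OF cf]) (intro continuous_intros)
    have c3: "continuous_on UNIV (\<lambda>p::'a\<times>'a. \<omega> (snd p))" by (rule cont_comp[OF c\<omega>]) (intro continuous_intros)
    have c4: "continuous_on UNIV (\<lambda>p::'a\<times>'a. \<omega> (- snd p + fst p))" by (rule cont_comp[OF c\<omega>]) (intro continuous_intros)
    have c5: "continuous_on UNIV (\<lambda>p::'a\<times>'a. \<omega> (fst p))" by (rule cont_comp[OF c\<omega>]) (intro continuous_intros)
    have c6: "continuous_on UNIV (\<lambda>p::'a\<times>'a. \<omega> (snd p) * \<omega> (- snd p + fst p) / \<omega> (fst p))"
      by (rule continuous_on_divide[OF continuous_on_mult[OF c3 c4] c5]) (simp add: \<omega>ne)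
    show ?thesis by (rule continuous_on_mult[OF continuous_on_mult[OF c1 c2] continuous_on_of_real[OF c6]])
  qed
  have cIntw: "continuous_on UNIV (\<lambda>y. h y * f (- y + w) * complex_of_real (\<omega> y * \<omega> (- y + w) / \<omega> w))" for w
  proof -
    have "continuous_on UNIV ((\<lambda>p. h (snd p) * f (- snd p + fst p) *
                 complex_of_real (\<omega> (snd p) * \<omega> (- snd p + fst p) / \<omega> (fst p))) \<circ> (\<lambda>y. (w, y)))"
      by (rule continuous_on_compose[OF _ continuous_on_subset[OF cInt]]) (intro continuous_intros, simp)
    then show ?thesis by (simp add: o_def)
  qed
  define F where "F = wconv \<mu> \<omega> h f"
  have Fdef: "F w = (\<integral>y. h y * f (- y + w) * complex_of_real (\<omega> y * \<omega> (- y + w) / \<omega> w) \<partial>\<mu>)" for w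
    unfolding F_def wconv_def by simp
  have cF: "continuous_on UNIV F"
  proof -
    have "continuous_on UNIV (\<lambda>w. \<integral>y. h y * f (- y + w) * complex_of_real (\<omega> y * \<omega> (- y + w) / \<omega> w) \<partial>\<mu>)"
    proof (rule cont_param_integral[where F="\<lambda>w y. h y * f (- y + w) * complex_of_real (\<omega> y * \<omega> (- y + w) / \<omega> w)", OF H(1) cInt])
      fix p :: 'a
      have "AE y in \<mu>. y \<notin> Ch' \<longrightarrow> (\<forall>w\<in>UNIV. h y * f (- y + w) * complex_of_real (\<omega> y * \<omega> (- y + w) / \<omega> w) = 0)"
        by (rule AE_I2) (simp add: zh)
      then show "\<exists>N B. open N \<and> p \<in> N \<and> compact B \<and> emeasure \<mu> B < \<infinity> \<and>
         (AE y in \<mu>. y \<notin> B \<longrightarrow> (\<forall>w\<in>N. h y * f (- y + w) * complex_of_real (\<omega> y * \<omega> (- y + w) / \<omega> w) = 0))"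
        apply (rule_tac exI[of _ UNIV], rule_tac exI[of _ Ch'])
        using cCh H(3)[OF cCh] by simp
    qed
    then show ?thesis by (simp add: Fdef[abs_def])
  qed
  have FR: "F (w + k) = F w" if k: "k \<in> K" for w k
    unfolding Fdef by (simp add: add.assoc[symmetric] fR[OF k] \<omega>R[OF k])
  show ?thesis
  proof (rule ext)
    fix x
    define \<Phi> where "\<Phi> z = f (- z + x) * complex_of_real (\<omega> z * \<omega> (- z + x) / \<omega> x)" for z
    have c\<Phi>: "continuous_on UNIV \<Phi>"
    proof -
      have c1: "continuous_on UNIV (\<lambda>z. f (-z + x))" by (rule cont_comp[OF cf]) (intro continuous_intros)
      have c2: "continuous_on UNIV (\<lambda>z. \<omega> (-z + x))" by (rule cont_comp[OF c\<omega>]) (intro continuous_intros)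
      have c3: "continuous_on UNIV (\<lambda>z. \<omega> z * \<omega> (-z + x) / \<omega> x)"
        by (rule continuous_on_divide[OF continuous_on_mult[OF c\<omega> c2] continuous_on_const]) (simp add: \<omega>ne)
      show ?thesis unfolding \<Phi>_def[abs_def] by (rule continuous_on_mult[OF c1 continuous_on_of_real[OF c3]])
    qed
    define C\<Phi> where "C\<Phi> = (\<lambda>q. fst q + - snd q) ` ({x} \<times> Cf')"
    have cC\<Phi>: "compact C\<Phi>" unfolding C\<Phi>_def by (rule compact_img_diff(1)[OF compact_sing cCf])
    have z\<Phi>: "\<Phi> z = 0" if z: "z \<notin> C\<Phi>" for z
    proof (rule ccontr)
      assume "\<Phi> z \<noteq> 0"
      then have "f (- z + x) \<noteq> 0" by (auto simp: \<Phi>_def)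
      then have "- z + x \<in> Cf'" using zf by blast
      then have "x + - (- z + x) \<in> C\<Phi>" unfolding C\<Phi>_def by (intro image_eqI[of _ _ "(x, - z + x)"]) auto
      moreover have "x + - (- z + x) = z" by (simp add: minus_add add.assoc[symmetric])
      ultimately show False using z by simp
    qed
    have z\<Phi>': "\<forall>z. z \<notin> C\<Phi> \<longrightarrow> \<Phi> z = 0" using z\<Phi> by blast
    have \<Phi>R: "\<Phi> (z + k) = \<Phi> z" if k: "k \<in> K" for z k
    proof -
      have e: "- (z + k) + x = - k + (- z + x)" by (simp only: minus_add add.assoc)
      show ?thesis unfolding \<Phi>_def e using fL[OF S(4)[OF k]] \<omega>L[OF S(4)[OF k]] \<omega>R[OF k] by simp
    qed
    have cHP: "continuous_on UNIV (\<lambda>k1. \<integral>z. h (k1 + z) * \<Phi> z \<partial>\<mu>)"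
    proof (rule cont_param_integral[where F="\<lambda>k1 z. h (k1 + z) * \<Phi> z", OF H(1)])
      show "continuous_on UNIV (\<lambda>p. h (fst p + snd p) * \<Phi> (snd p))"
        by (rule continuous_on_mult; rule cont_comp[OF ch] cont_comp[OF c\<Phi>]; intro continuous_intros)
      fix p :: 'a
      have "AE y in \<mu>. y \<notin> C\<Phi> \<longrightarrow> (\<forall>k1\<in>UNIV. h (k1 + y) * \<Phi> y = 0)"
        by (rule AE_I2) (simp add: z\<Phi>)
      then show "\<exists>N B. open N \<and> p \<in> N \<and> compact B \<and> emeasure \<mu> B < \<infinity> \<and>
         (AE y in \<mu>. y \<notin> B \<longrightarrow> (\<forall>k1\<in>N. h (k1 + y) * \<Phi> y = 0))"
        apply (rule_tac exI[of _ UNIV], rule_tac exI[of _ C\<Phi>])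
        using cC\<Phi> H(3)[OF cC\<Phi>] by simp
    qed
    have LHS: "sharp \<nu> F x = (\<integral>k1. (\<integral>z. h (k1 + z) * \<Phi> z \<partial>\<mu>) \<partial>\<nu>)"
    proof -
      have "sharp \<nu> F x = (\<integral>k1. F (k1 + x) \<partial>\<nu>)"
        unfolding sharp_def
      proof (rule Bochner_Integration.integral_cong[OF refl])
        fix k1
        have "(\<integral>k2. F (k1 + x + k2) \<partial>\<nu>) = (\<integral>k2. F (k1 + x) \<partial>\<nu>)"
        proof (rule integral_cong_AE)
          show "(\<lambda>k2. F (k1 + x + k2)) \<in> borel_measurable \<nu>"
            by (rule cont_meas[OF N(1)], rule cont_comp[OF cF]) (intro continuous_intros)
          show "(\<lambda>k2. F (k1 + x)) \<in> borel_measurable \<nu>" by simp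
          show "AE k2 in \<nu>. F (k1 + x + k2) = F (k1 + x)" using AEK by eventually_elim (simp add: FR)
        qed
        then show "(\<integral>k2. F (k1 + x + k2) \<partial>\<nu>) = F (k1 + x)" using cnst by simp
      qed
      also have "\<dots> = (\<integral>k1. (\<integral>z. h (k1 + z) * \<Phi> z \<partial>\<mu>) \<partial>\<nu>)"
      proof (rule integral_cong_AE)
        show "(\<lambda>k1. F (k1 + x)) \<in> borel_measurable \<nu>"
          by (rule cont_meas[OF N(1)], rule cont_comp[OF cF]) (intro continuous_intros)
        show "(\<lambda>k1. \<integral>z. h (k1 + z) * \<Phi> z \<partial>\<mu>) \<in> borel_measurable \<nu>"
          by (rule cont_meas[OF N(1) cHP])
        show "AE k1 in \<nu>. F (k1 + x) = (\<integral>z. h (k1 + z) * \<Phi> z \<partial>\<mu>)"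
          using AEK
        proof eventually_elim
          case (elim k1)
          have e: "- (k1 + z) + (k1 + x) = - z + x" for z by (simp only: minus_add add.assoc minus_add_cancel)
          have "F (k1 + x) = (\<integral>z. h (k1 + z) * f (- (k1 + z) + (k1 + x)) *
                    complex_of_real (\<omega> (k1 + z) * \<omega> (- (k1 + z) + (k1 + x)) / \<omega> (k1 + x)) \<partial>\<mu>)"
            unfolding Fdef by (rule integral_translate[OF H(1) Hinv cIntw, symmetric])
          also have "\<dots> = (\<integral>z. h (k1 + z) * \<Phi> z \<partial>\<mu>)"
            unfolding e \<Phi>_def using \<omega>L[OF elim] by (simp add: mult.assoc)
          finally show ?case .
        qed
      qed
      finally show ?thesis .
    qed
    have cHH: "continuous_on UNIV (\<lambda>p::'a\<times>'a. \<integral>k2. h (snd p + fst p + k2) \<partial>\<nu>)"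
    proof (rule cont_param_integral[where F="\<lambda>p k2. h (snd p + fst p + k2)", OF N(1)])
      show "continuous_on UNIV (\<lambda>q. h (snd (fst q) + fst (fst q) + snd q))"
        by (rule cont_comp[OF ch]) (intro continuous_intros)
      fix p :: "'a \<times> 'a"
      have "AE k2 in \<nu>. k2 \<notin> K \<longrightarrow> (\<forall>q\<in>UNIV. h (snd q + fst q + k2) = 0)" using AEK by eventually_elim simp
      then show "\<exists>N B. open N \<and> p \<in> N \<and> compact B \<and> emeasure \<nu> B < \<infinity> \<and>
         (AE k2 in \<nu>. k2 \<notin> B \<longrightarrow> (\<forall>q\<in>N. h (snd q + fst q + k2) = 0))"
        apply (rule_tac exI[of _ UNIV], rule_tac exI[of _ K])
        using S(1) finK by simp
    qed
    have inner: "(\<integral>z. (\<integral>k2. h (k1 + z + k2) \<partial>\<nu>) * \<Phi> z \<partial>\<mu>) = (\<integral>z. h (k1 + z) * \<Phi> z \<partial>\<mu>)" for k1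
    proof -
      have "(\<integral>z. (\<integral>k2. h (k1 + z + k2) \<partial>\<nu>) * \<Phi> z \<partial>\<mu>) = (\<integral>z. (\<integral>k2. h (k1 + z + k2) * \<Phi> z \<partial>\<nu>) \<partial>\<mu>)"
        by (simp only: integral_mult_left_zero)
      also have "\<dots> = (\<integral>k2. (\<integral>z. h (k1 + z + k2) * \<Phi> z \<partial>\<mu>) \<partial>\<nu>)"
      proof (rule fubini_cc[where F="\<lambda>z k2. h (k1 + z + k2) * \<Phi> z", OF H(1) N(1) cC\<Phi> S(1) H(3)[OF cC\<Phi>] finK])
        show "continuous_on UNIV (\<lambda>p. h (k1 + fst p + snd p) * \<Phi> (fst p))"
          by (rule continuous_on_mult; rule cont_comp[OF ch] cont_comp[OF c\<Phi>]; intro continuous_intros)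
        show "AE z in \<mu>. z \<notin> C\<Phi> \<longrightarrow> (\<forall>k2. h (k1 + z + k2) * \<Phi> z = 0)" by (rule AE_I2) (simp add: z\<Phi>)
        show "AE k2 in \<nu>. k2 \<notin> K \<longrightarrow> (\<forall>z. h (k1 + z + k2) * \<Phi> z = 0)" using AEK by eventually_elim simp
      qed
      also have "\<dots> = (\<integral>k2. (\<integral>z. h (k1 + z) * \<Phi> z \<partial>\<mu>) \<partial>\<nu>)"
      proof (rule integral_cong_AE)
        have "continuous_on UNIV (\<lambda>k2. \<integral>z. h (k1 + z + k2) * \<Phi> z \<partial>\<mu>)"
        proof (rule cont_param_integral[where F="\<lambda>k2 z. h (k1 + z + k2) * \<Phi> z", OF H(1)])
          show "continuous_on UNIV (\<lambda>p. h (k1 + snd p + fst p) * \<Phi> (snd p))"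
            by (rule continuous_on_mult; rule cont_comp[OF ch] cont_comp[OF c\<Phi>]; intro continuous_intros)
          fix p :: 'a
          have "AE y in \<mu>. y \<notin> C\<Phi> \<longrightarrow> (\<forall>k2\<in>UNIV. h (k1 + y + k2) * \<Phi> y = 0)"
            by (rule AE_I2) (simp add: z\<Phi>)
          then show "\<exists>N B. open N \<and> p \<in> N \<and> compact B \<and> emeasure \<mu> B < \<infinity> \<and>
             (AE y in \<mu>. y \<notin> B \<longrightarrow> (\<forall>k2\<in>N. h (k1 + y + k2) * \<Phi> y = 0))"
            apply (rule_tac exI[of _ UNIV], rule_tac exI[of _ C\<Phi>])
            using cC\<Phi> H(3)[OF cC\<Phi>] by simp
        qed
        then show "(\<lambda>k2. \<integral>z. h (k1 + z + k2) * \<Phi> z \<partial>\<mu>) \<in> borel_measurable \<nu>" by (rule cont_meas[OF N(1)])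
        show "(\<lambda>k2. \<integral>z. h (k1 + z) * \<Phi> z \<partial>\<mu>) \<in> borel_measurable \<nu>" by simp
        have cG: "continuous_on UNIV (\<lambda>w. h (k1 + w) * \<Phi> w)"
          by (rule continuous_on_mult[OF _ c\<Phi>], rule cont_comp[OF ch]) (intro continuous_intros)
        have zG: "\<forall>w. w \<notin> C\<Phi> \<longrightarrow> h (k1 + w) * \<Phi> w = 0" using z\<Phi> by simp
        show "AE k2 in \<nu>. (\<integral>z. h (k1 + z + k2) * \<Phi> z \<partial>\<mu>) = (\<integral>z. h (k1 + z) * \<Phi> z \<partial>\<mu>)"
          using AEK
        proof eventually_elim
          case (elim k2)
          have "(\<integral>z. h (k1 + z + k2) * \<Phi> z \<partial>\<mu>) = (\<integral>z. h (k1 + (z + k2)) * \<Phi> (z + k2) \<partial>\<mu>)"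
            using \<Phi>R[OF elim] by (simp add: add.assoc)
          also have "\<dots> = (\<integral>z. h (k1 + z) * \<Phi> z \<partial>\<mu>)"
            by (rule right_inv[OF lc haar Ksg nu cG cC\<Phi> zG elim])
          finally show ?case .
        qed
      qed
      also have "\<dots> = (\<integral>z. h (k1 + z) * \<Phi> z \<partial>\<mu>)" by (rule cnst)
      finally show ?thesis .
    qed
    have "wconv \<mu> \<omega> (sharp \<nu> h) f x = (\<integral>z. (\<integral>k1. (\<integral>k2. h (k1 + z + k2) \<partial>\<nu>) \<partial>\<nu>) * \<Phi> z \<partial>\<mu>)"
      unfolding wconv_def sharp_def \<Phi>_def by (simp add: mult.assoc)
    also have "\<dots> = (\<integral>z. (\<integral>k1. (\<integral>k2. h (k1 + z + k2) \<partial>\<nu>) * \<Phi> z \<partial>\<nu>) \<partial>\<mu>)"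
      by (simp only: integral_mult_left_zero)
    also have "\<dots> = (\<integral>k1. (\<integral>z. (\<integral>k2. h (k1 + z + k2) \<partial>\<nu>) * \<Phi> z \<partial>\<mu>) \<partial>\<nu>)"
    proof (rule fubini_cc[where F="\<lambda>z k1. (\<integral>k2. h (k1 + z + k2) \<partial>\<nu>) * \<Phi> z", OF H(1) N(1) cC\<Phi> S(1) H(3)[OF cC\<Phi>] finK])
      show "continuous_on UNIV (\<lambda>p. (\<integral>k2. h (snd p + fst p + k2) \<partial>\<nu>) * \<Phi> (fst p))"
        by (rule continuous_on_mult[OF cHH], rule cont_comp[OF c\<Phi>]) (intro continuous_intros)
      show "AE z in \<mu>. z \<notin> C\<Phi> \<longrightarrow> (\<forall>k1. (\<integral>k2. h (k1 + z + k2) \<partial>\<nu>) * \<Phi> z = 0)"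
        by (rule AE_I2) (simp add: z\<Phi>)
      show "AE k1 in \<nu>. k1 \<notin> K \<longrightarrow> (\<forall>z. (\<integral>k2. h (k1 + z + k2) \<partial>\<nu>) * \<Phi> z = 0)"
        using AEK by eventually_elim simp
    qed
    also have "\<dots> = (\<integral>k1. (\<integral>z. h (k1 + z) * \<Phi> z \<partial>\<mu>) \<partial>\<nu>)"
      by (rule Bochner_Integration.integral_cong[OF refl inner])
    finally have RHS: "wconv \<mu> \<omega> (sharp \<nu> h) f x = (\<integral>k1. (\<integral>z. h (k1 + z) * \<Phi> z \<partial>\<mu>) \<partial>\<nu>)" .
    show "sharp \<nu> (wconv \<mu> \<omega> h f) x = wconv \<mu> \<omega> (sharp \<nu> h) f x"
      using LHS RHS by (simp add: F_def)
  qed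
qed

end
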